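(* Let $d\ge1$ and let $\Phi$ be a Young function such that the limits $\lim_{t\to0^+}\frac{t\Phi'(t)}{\Phi(t)}$ and $\lim_{t\to\infty}\frac{t\Phi'(t)}{\Phi(t)}$ exist. If $1<q_{[\Phi]}\le p_{[\Phi]}<\infty$, then $$L^p(\mathbb R^d)\cap L^q(\mathbb R^d)\subseteq L^\Phi(\mathbb R^d)\subseteq L^p(\mathbb R^d)+L^q(\mathbb R^d)$$ for all $p\in(p_{[\Phi]},\infty)$ and $q\in(1,q_{[\Phi]})$.
   Context: A Young function is a convex function $\Phi:[0,\infty)\to[0,\infty)$ with $\Phi(0)=0$, $\Phi(t)>0$ for $t>0$, and $\lim_{t\to\infty}\Phi(t)=\infty$. $\Phi'$ denotes the right derivative of $\Phi$. The Lebesgue exponents of $\Phi$ are $p_\Phi=\sup_{t>0}\frac{t\Phi'(t)}{\Phi(t)}$ and $q_\Phi=\inf_{t>0}\frac{t\Phi'(t)}{\Phi(t)}$. Two Young functions $\Phi,\Psi$ are equivalent if there is $C\ge1$ with $C^{-1}\Psi(t)\le\Phi(t)\le C\Psi(t)$ for all $t\ge0$; $[\Phi]$ denotes the set of Young functions equivalent to $\Phi$, and $p_{[\Phi]}=\inf\{p_\Psi:\Psi\in[\Phi]\}$, $q_{[\Phi]}=\sup\{q_\Psi:\Psi\in[\Phi]\}$. For a measurable $f$ on $\mathbb R^d$, $\rho_\Phi(f)=\int_{\mathbb R^d}\Phi(|f(x)|)\,dx$, the Luxemburg norm is $\|f\|_{L^\Phi}=\inf\{\lambda>0:\rho_\Phi(f/\lambda)\le1\}$,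 and the Orlicz space $L^\Phi(\mathbb R^d)$ consists of (classes of) measurable $f$ with $\|f\|_{L^\Phi}<\infty$. $L^p+L^q$ is the set of sums $g+h$ with $g\in L^p$, $h\in L^q$. *)

theory Defs
  imports "HOL-Analysis.Analysis"
begin

text \<open>Young function (only its values on [0,\<infinity>) matter).\<close>
definition young_fun :: "(real \<Rightarrow> real) \<Rightarrow> bool" where
  "young_fun \<Phi> \<longleftrightarrow> convex_on {0..} \<Phi> \<and> \<Phi> 0 = 0 \<and> (\<forall>t>0. \<Phi> t > 0)
     \<and> filterlim \<Phi> at_top at_top"

definition rderiv :: "(real \<Rightarrow> real) \<Rightarrow> real \<Rightarrow> real" where
  "rderiv \<Phi> t = Lim (at_right 0) (\<lambda>h. (\<Phi> (t + h) - \<Phi> t) / h)"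

definition index_ratio :: "(real \<Rightarrow> real) \<Rightarrow> real \<Rightarrow> real" where
  "index_ratio \<Phi> t = t * rderiv \<Phi> t / \<Phi> t"

text \<open>Lebesgue exponents (as extended reals, since the sup may be infinite).\<close>
definition p_exp :: "(real \<Rightarrow> real) \<Rightarrow> ereal" where
  "p_exp \<Phi> = (SUP t\<in>{0<..}. ereal (index_ratio \<Phi> t))"

definition q_exp :: "(real \<Rightarrow> real) \<Rightarrow> ereal" where
  "q_exp \<Phi> = (INF t\<in>{0<..}. ereal (index_ratio \<Phi> t))"

definition young_equiv :: "(real \<Rightarrow> real) \<Rightarrow> (real \<Rightarrow> real) \<Rightarrow> bool" where
  "young_equiv \<Phi> \<Psi> \<longleftrightarrow> (\<exists>C\<ge>1. \<forall>t\<ge>0. \<Psi> t / C \<le> \<Phi> t \<and> \<Phi> t \<le> C * \<Psi> t)"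

definition young_class :: "(real \<Rightarrow> real) \<Rightarrow> (real \<Rightarrow> real) set" where
  "young_class \<Phi> = {\<Psi>. young_fun \<Psi> \<and> young_equiv \<Phi> \<Psi>}"

definition p_class :: "(real \<Rightarrow> real) \<Rightarrow> ereal" where
  "p_class \<Phi> = (INF \<Psi>\<in>young_class \<Phi>. p_exp \<Psi>)"

definition q_class :: "(real \<Rightarrow> real) \<Rightarrow> ereal" where
  "q_class \<Phi> = (SUP \<Psi>\<in>young_class \<Phi>. q_exp \<Psi>)"

definition modular :: "(real \<Rightarrow> real) \<Rightarrow> ('a::euclidean_space \<Rightarrow> real) \<Rightarrow> ennreal" where
  "modular \<Phi> f = (\<integral>\<^sup>+ x. ennreal (\<Phi> \<bar>f x\<bar>) \<partial>lebesgue)"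

definition luxemburg_norm :: "(real \<Rightarrow> real) \<Rightarrow> ('a::euclidean_space \<Rightarrow> real) \<Rightarrow> ennreal" where
  "luxemburg_norm \<Phi> f = (INF c\<in>{c::real. c > 0 \<and> modular \<Phi> (\<lambda>x. f x / c) \<le> 1}. ennreal c)"

definition orlicz_space :: "(real \<Rightarrow> real) \<Rightarrow> ('a::euclidean_space \<Rightarrow> real) set" where
  "orlicz_space \<Phi> = {f \<in> borel_measurable lebesgue. luxemburg_norm \<Phi> f < \<infinity>}"

definition Lp_space :: "real \<Rightarrow> ('a::euclidean_space \<Rightarrow> real) set" where
  "Lp_space p = {f \<in> borel_measurable lebesgue. (\<integral>\<^sup>+ x. ennreal (\<bar>f x\<bar> powr p) \<partial>lebesgue) < \<infinity>}"

definition Lp_sum :: "real \<Rightarrow> real \<Rightarrow> ('a::euclidean_space \<Rightarrow> real) set" where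
  "Lp_sum p q = {f. \<exists>g h. g \<in> Lp_space p \<and> h \<in> Lp_space q \<and> f = (\<lambda>x. g x + h x)}"

end

theory Submission
  imports Defs
begin


lemma right_deriv_mono_aux:
  fixes h :: "real \<Rightarrow> real"
  assumes ab: "a < b" and e: "e > 0"
    and cont: "continuous_on {a..b} h"
    and der: "\<And>t. a \<le> t \<Longrightarrow> t < b \<Longrightarrow> \<exists>D. (h has_real_derivative D) (at t within {t<..}) \<and> D \<le> 0"
  shows "h b \<le> h a + e * (b - a)"
proof (rule ccontr)
  assume nb: "\<not> ?thesis"
  define g where "g y = h y - h a - e * (y - a)" for y
  have gc: "continuous_on {a..b} g" unfolding g_def
    by (intro continuous_intros cont)
  define Z where "Z = {y \<in> {a..b}. g y \<le> (\<lambda>_. 0) y}"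
  have "closed Z" unfolding Z_def
    by (rule continuous_on_closed_Collect_le[OF gc]) (auto intro: continuous_intros)
  moreover have "bounded Z" unfolding Z_def by (rule bounded_subset[of "{a..b}"]) auto
  ultimately have "compact Z" by (simp add: compact_eq_bounded_closed)
  moreover have "a \<in> Z" using ab by (auto simp: Z_def g_def)
  ultimately obtain c where cZ: "c \<in> Z" and cmax': "\<forall>y\<in>Z. y \<le> c"
    using compact_attains_sup[of Z] by auto
  have cmax: "\<And>y. y \<in> Z \<Longrightarrow> y \<le> c" using cmax' by blast
  have "g b > 0" using nb by (simp add: g_def)
  hence "c \<noteq> b" using cZ by (auto simp: Z_def)
  hence cb: "c < b" and ac: "a \<le> c" using cZ by (auto simp: Z_def)
  obtain D where D: "(h has_real_derivative D) (at c within {c<..})" "D \<le> 0"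
    using der[OF ac cb] by blast
  have "(g has_real_derivative D - e) (at c within {c<..})"
    unfolding g_def by (auto intro!: derivative_eq_intros D(1))
  hence "((\<lambda>y. (g y - g c) / (y - c)) \<longlongrightarrow> D - e) (at_right c)"
    by (simp add: has_field_derivative_iff)
  moreover have "D - e < 0" using D e by simp
  ultimately have "eventually (\<lambda>y. (g y - g c) / (y - c) < 0) (at_right c)"
    by (rule order_tendstoD)
  then obtain \<beta> where \<beta>: "\<beta> > c" "\<And>y. y > c \<Longrightarrow> y < \<beta> \<Longrightarrow> (g y - g c) / (y - c) < 0"
    unfolding eventually_at_right_field by blast
  define y where "y = min ((c + \<beta>) / 2) b"
  have yc: "y > c" "y < \<beta>" "y \<le> b" using \<beta>(1) cb by (auto simp: y_def min_def)
  have "(g y - g c) / (y - c) < 0" using \<beta>(2) yc by auto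
  hence "g y < g c" using yc by (simp add: divide_less_0_iff)
  hence "y \<in> Z" using cZ yc ac by (auto simp: Z_def)
  thus False using cmax yc by force
qed

lemma right_deriv_mono:
  fixes h :: "real \<Rightarrow> real"
  assumes ab: "a \<le> b"
    and cont: "continuous_on {a..b} h"
    and der: "\<And>t. a \<le> t \<Longrightarrow> t < b \<Longrightarrow> \<exists>D. (h has_real_derivative D) (at t within {t<..}) \<and> D \<le> 0"
  shows "h b \<le> h a"
proof (cases "a = b")
  case False
  hence ab': "a < b" using ab by simp
  show ?thesis
  proof (rule field_le_epsilon)
    fix d :: real assume d: "d > 0"
    have "h b \<le> h a + (d / (b - a)) * (b - a)"
      by (rule right_deriv_mono_aux[OF ab' _ cont der]) (use d ab' in auto)
    thus "h b \<le> h a + d" using ab' by simp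
  qed
qed simp



lemma young_pos: "young_fun \<Phi> \<Longrightarrow> t > 0 \<Longrightarrow> \<Phi> t > 0"
  by (simp add: young_fun_def)

lemma young_nonneg: "young_fun \<Phi> \<Longrightarrow> t \<ge> 0 \<Longrightarrow> \<Phi> t \<ge> 0"
  by (cases "t = 0") (auto simp: young_fun_def intro: less_imp_le)

lemma young_convex: "young_fun \<Phi> \<Longrightarrow> convex_on {0..} \<Phi>"
  by (simp add: young_fun_def)

lemma young_mono:
  assumes Y: "young_fun \<Phi>" and x: "0 \<le> x" "x \<le> y"
  shows "\<Phi> x \<le> \<Phi> y"
proof (cases "x = y")
  case False
  hence y: "y > 0" using x by simp
  have cv: "convex_on {0..y} \<Phi>"
    by (rule convex_on_subset[OF young_convex[OF Y]]) auto
  have "\<Phi> x \<le> (\<Phi> y - \<Phi> 0) / (y - 0) * (x - 0) + \<Phi> 0"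
    using convex_onD_Icc'[OF cv, of x] x by simp
  also have "\<dots> = \<Phi> y * (x / y)" using Y by (simp add: young_fun_def)
  also have "\<dots> \<le> \<Phi> y * 1"
    by (rule mult_left_mono) (use x y young_nonneg[OF Y, of y] in auto)
  finally show ?thesis by simp
qed simp

lemma young_cont: "young_fun \<Phi> \<Longrightarrow> continuous_on {0<..} \<Phi>"
  by (rule convex_on_continuous) (auto intro: convex_on_subset[OF young_convex])

lemma rderiv_tendsto:
  assumes Y: "young_fun \<Phi>" and t: "t > 0"
  shows "((\<lambda>h. (\<Phi> (t + h) - \<Phi> t) / h) \<longlongrightarrow> rderiv \<Phi> t) (at_right 0)"
proof -
  define Q where "Q h = (\<Phi> (t + h) - \<Phi> t) / h" for h
  have cv: "convex_on {0..} \<Phi>" using Y by (simp add: young_fun_def)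
  have mono: "Q a \<le> Q b" if "a \<in> UNIV" "b \<in> UNIV" "0 < a" "a \<le> b" for a b
  proof (cases "a = b")
    case False
    hence "a < b" using that by simp
    from convex_on_slope_le(1)[OF cv, of t "t + b" "t + a"] this that t
    have "(\<Phi> t - \<Phi> (t + a)) / (t - (t + a)) \<le> (\<Phi> t - \<Phi> (t + b)) / (t - (t + b))" by simp
    thus ?thesis unfolding Q_def
      by (simp add: minus_divide_right[symmetric] ) (smt (verit) minus_divide_left)
  qed simp
  have bnd: "(\<Phi> t - \<Phi> 0) / t \<le> Q a" if "a \<in> UNIV" "0 < a" for a
  proof -
    from convex_on_slope_le[OF cv, of 0 "t + a" t] that t
    have "(\<Phi> 0 - \<Phi> t) / (0 - t) \<le> (\<Phi> 0 - \<Phi> (t + a)) / (0 - (t + a))"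
      "(\<Phi> 0 - \<Phi> (t + a)) / (0 - (t + a)) \<le> (\<Phi> t - \<Phi> (t + a)) / (t - (t + a))" by auto
    hence "(\<Phi> 0 - \<Phi> t) / (0 - t) \<le> (\<Phi> t - \<Phi> (t + a)) / (t - (t + a))" by linarith
    thus ?thesis unfolding Q_def
      by (smt (verit) minus_divide_divide add_diff_cancel_left' diff_0 minus_diff_eq)
  qed
  have "(Q \<longlongrightarrow> Inf (Q ` ({0<..} \<inter> UNIV))) (at 0 within ({0<..} \<inter> UNIV))"
    by (rule Lim_right_bound[OF mono bnd]) auto
  hence L: "(Q \<longlongrightarrow> Inf (Q ` ({0<..} \<inter> UNIV))) (at_right 0)" by simp
  hence "rderiv \<Phi> t = Inf (Q ` ({0<..} \<inter> UNIV))"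
    unfolding rderiv_def Q_def[abs_def] by (intro tendsto_Lim) auto
  with L show ?thesis unfolding Q_def[abs_def] by simp
qed

lemma rderiv_has_deriv:
  assumes Y: "young_fun \<Phi>" and t: "t > 0"
  shows "(\<Phi> has_real_derivative rderiv \<Phi> t) (at t within {t<..})"
proof -
  have "((\<lambda>x. (\<Phi> (x + t) - \<Phi> t) / (x + t - t)) \<longlongrightarrow> rderiv \<Phi> t) (at_right 0)"
    using rderiv_tendsto[OF Y t] by (simp add: add.commute)
  hence "((\<lambda>y. (\<Phi> y - \<Phi> t) / (y - t)) \<longlongrightarrow> rderiv \<Phi> t) (at_right t)"
    by (simp add: filterlim_at_right_to_0[of _ _ t])
  thus ?thesis by (simp add: has_field_derivative_iff)
qed

lemma upper_decay:
  assumes Y: "young_fun \<Psi>" and hyp: "\<And>t. t > 0 \<Longrightarrow> t * rderiv \<Psi> t \<le> s * \<Psi> t"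
    and a: "0 < a" "a \<le> b"
  shows "\<Psi> b * b powr (-s) \<le> \<Psi> a * a powr (-s)"
proof (rule right_deriv_mono[OF a(2)])
  show "continuous_on {a..b} (\<lambda>x. \<Psi> x * x powr (-s))"
    using a by (intro continuous_intros continuous_on_subset[OF young_cont[OF Y]]) auto
next
  fix t assume t: "a \<le> t" "t < b"
  hence t0: "t > 0" using a by simp
  have "((\<lambda>x. \<Psi> x * x powr (-s)) has_real_derivative
      rderiv \<Psi> t * t powr (-s) + \<Psi> t * ((-s) * t powr (-s - 1))) (at t within {t<..})"
    using DERIV_mult[OF rderiv_has_deriv[OF Y t0] has_field_derivative_at_within[OF has_real_derivative_powr[OF t0, of "-s"]]] by (simp add: algebra_simps)
  moreover have "rderiv \<Psi> t * t powr (-s) + \<Psi> t * ((-s) * t powr (-s - 1))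
      = t powr (-s) / t * (t * rderiv \<Psi> t - s * \<Psi> t)"
    using t0 by (simp add: powr_diff[of t "-s" 1] field_simps)
  moreover have "t powr (-s) / t * (t * rderiv \<Psi> t - s * \<Psi> t) \<le> 0"
    using hyp[OF t0] t0 by (intro mult_nonneg_nonpos) auto
  ultimately show "\<exists>D. ((\<lambda>x. \<Psi> x * x powr (-s)) has_real_derivative D) (at t within {t<..}) \<and> D \<le> 0"
    by auto
qed

lemma lower_growth:
  assumes Y: "young_fun \<Psi>" and hyp: "\<And>t. t > 0 \<Longrightarrow> r * \<Psi> t \<le> t * rderiv \<Psi> t"
    and a: "0 < a" "a \<le> b"
  shows "\<Psi> a * a powr (-r) \<le> \<Psi> b * b powr (-r)"
proof -
  have "- (\<Psi> b * b powr (-r)) \<le> - (\<Psi> a * a powr (-r))"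
  proof (rule right_deriv_mono[OF a(2), where h = "\<lambda>x. - (\<Psi> x * x powr (-r))"])
    show "continuous_on {a..b} (\<lambda>x. - (\<Psi> x * x powr (-r)))"
      using a by (intro continuous_intros continuous_on_subset[OF young_cont[OF Y]]) auto
  next
    fix t assume t: "a \<le> t" "t < b"
    hence t0: "t > 0" using a by simp
    have "((\<lambda>x. - (\<Psi> x * x powr (-r))) has_real_derivative
        - (rderiv \<Psi> t * t powr (-r) + \<Psi> t * ((-r) * t powr (-r - 1)))) (at t within {t<..})"
      using DERIV_minus[OF DERIV_mult[OF rderiv_has_deriv[OF Y t0] has_field_derivative_at_within[OF has_real_derivative_powr[OF t0, of "-r"]]]] by (simp add: algebra_simps)
    moreover have "- (rderiv \<Psi> t * t powr (-r) + \<Psi> t * ((-r) * t powr (-r - 1)))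
        = t powr (-r) / t * (r * \<Psi> t - t * rderiv \<Psi> t)"
      using t0 by (simp add: powr_diff[of t "-r" 1] field_simps)
    moreover have "t powr (-r) / t * (r * \<Psi> t - t * rderiv \<Psi> t) \<le> 0"
      using hyp[OF t0] t0 by (intro mult_nonneg_nonpos) auto
    ultimately show "\<exists>D. ((\<lambda>x. - (\<Psi> x * x powr (-r))) has_real_derivative D) (at t within {t<..}) \<and> D \<le> 0"
      by auto
  qed
  thus ?thesis by simp
qed



lemma powr_neg_le1:
  fixes x A B s :: real
  assumes "x > 0" "A * x powr (-s) \<le> B" shows "A \<le> B * x powr s"
proof -
  have "A * x powr (-s) * x powr s \<le> B * x powr s"
    by (rule mult_right_mono[OF assms(2)]) simp
  moreover have "A * x powr (-s) * x powr s = A"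
    using assms(1) by (simp add: mult.assoc powr_add[symmetric])
  ultimately show ?thesis by simp
qed

lemma powr_neg_le2:
  fixes x A B s :: real
  assumes "x > 0" "B \<le> A * x powr (-s)" shows "B * x powr s \<le> A"
proof -
  have "B * x powr s \<le> A * x powr (-s) * x powr s"
    by (rule mult_right_mono[OF assms(2)]) simp
  moreover have "A * x powr (-s) * x powr s = A"
    using assms(1) by (simp add: mult.assoc powr_add[symmetric])
  ultimately show ?thesis by simp
qed

lemma Phi_bounds:
  assumes Y: "young_fun \<Phi>" and P: "p_class \<Phi> < ereal p" and Qc: "ereal q < q_class \<Phi>"
  obtains K k where "K > 0" "k > 0" "\<And>t. t \<ge> 0 \<Longrightarrow> \<Phi> t \<le> K * (t powr p + t powr q)"
    "\<And>t. 0 \<le> t \<Longrightarrow> t \<le> 1 \<Longrightarrow> k * t powr p \<le> \<Phi> t"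
    "\<And>t. t \<ge> 1 \<Longrightarrow> k * t powr q \<le> \<Phi> t"
proof -
  obtain \<Psi>1 where \<Psi>1: "\<Psi>1 \<in> young_class \<Phi>" "p_exp \<Psi>1 < ereal p"
    using P unfolding p_class_def by (auto simp: INF_less_iff)
  have Y1: "young_fun \<Psi>1" using \<Psi>1 by (simp add: young_class_def)
  obtain C1 where C1: "C1 \<ge> 1" "\<And>t. t \<ge> 0 \<Longrightarrow> \<Psi>1 t / C1 \<le> \<Phi> t \<and> \<Phi> t \<le> C1 * \<Psi>1 t"
    using \<Psi>1 by (auto simp: young_class_def young_equiv_def)
  have h1: "t * rderiv \<Psi>1 t \<le> p * \<Psi>1 t" if t: "t > 0" for t
  proof -
    have "ereal (index_ratio \<Psi>1 t) \<le> p_exp \<Psi>1"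
      unfolding p_exp_def by (rule SUP_upper) (use t in auto)
    hence "ereal (index_ratio \<Psi>1 t) < ereal p" using \<Psi>1(2) by (rule le_less_trans)
    hence "index_ratio \<Psi>1 t < p" by simp
    thus ?thesis using young_pos[OF Y1 t] by (simp add: index_ratio_def pos_divide_less_eq)
  qed
  obtain \<Psi>2 where \<Psi>2: "\<Psi>2 \<in> young_class \<Phi>" "ereal q < q_exp \<Psi>2"
    using Qc unfolding q_class_def by (auto simp: less_SUP_iff)
  have Y2: "young_fun \<Psi>2" using \<Psi>2 by (simp add: young_class_def)
  obtain C2 where C2: "C2 \<ge> 1" "\<And>t. t \<ge> 0 \<Longrightarrow> \<Psi>2 t / C2 \<le> \<Phi> t \<and> \<Phi> t \<le> C2 * \<Psi>2 t"
    using \<Psi>2 by (auto simp: young_class_def young_equiv_def)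
  have h2: "q * \<Psi>2 t \<le> t * rderiv \<Psi>2 t" if t: "t > 0" for t
  proof -
    have "q_exp \<Psi>2 \<le> ereal (index_ratio \<Psi>2 t)"
      unfolding q_exp_def by (rule INF_lower) (use t in auto)
    hence "ereal q < ereal (index_ratio \<Psi>2 t)" using \<Psi>2(2) by (metis less_le_trans)
    hence "q < index_ratio \<Psi>2 t" by simp
    thus ?thesis using young_pos[OF Y2 t] by (simp add: index_ratio_def pos_less_divide_eq)
  qed
  have a1: "\<Psi>1 1 > 0" "\<Psi>2 1 > 0" using young_pos[OF Y1] young_pos[OF Y2] by auto
  define K where "K = C1 * \<Psi>1 1 + C2 * \<Psi>2 1"
  define k where "k = min (\<Psi>1 1 / C1) (\<Psi>2 1 / C2)"
  have "K > 0" unfolding K_def using a1 C1 C2 by (simp add: add_pos_pos)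
  moreover have "k > 0" unfolding k_def using a1 C1 C2 by simp
  moreover have "\<Phi> t \<le> K * (t powr p + t powr q)" if t: "t \<ge> 0" for t
  proof (cases "t = 0")
    case True thus ?thesis using Y by (simp add: young_fun_def)
  next
    case False
    hence t0: "t > 0" using t by simp
    have pp: "t powr p \<ge> 0" "t powr q \<ge> 0" by auto
    show ?thesis
    proof (cases "t \<ge> 1")
      case True
      have "\<Psi>1 t * t powr (-p) \<le> \<Psi>1 1 * 1 powr (-p)"
        by (rule upper_decay[OF Y1 h1]) (use True in auto)
      hence "\<Psi>1 t \<le> \<Psi>1 1 * t powr p" using t0 by (intro powr_neg_le1) auto
      hence "\<Phi> t \<le> C1 * (\<Psi>1 1 * t powr p)" using C1 t
        by (meson mult_left_mono order_trans zero_le_one)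
      also have "\<dots> \<le> K * (t powr p + t powr q)" unfolding K_def using pp a1 C1 C2
        by (simp add: algebra_simps add_nonneg_nonneg mult_nonneg_nonneg)
      finally show ?thesis .
    next
      case False
      have "\<Psi>2 t * t powr (-q) \<le> \<Psi>2 1 * 1 powr (-q)"
        by (rule lower_growth[OF Y2 h2]) (use False t0 in auto)
      hence "\<Psi>2 t \<le> \<Psi>2 1 * t powr q" using t0 by (intro powr_neg_le1) auto
      hence "\<Phi> t \<le> C2 * (\<Psi>2 1 * t powr q)" using C2 t
        by (meson mult_left_mono order_trans zero_le_one)
      also have "\<dots> \<le> K * (t powr p + t powr q)" unfolding K_def using pp a1 C1 C2
        by (simp add: algebra_simps add_nonneg_nonneg mult_nonneg_nonneg)
      finally show ?thesis .
    qed
  qed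
  moreover have "k * t powr p \<le> \<Phi> t" if t: "0 \<le> t" "t \<le> 1" for t
  proof (cases "t = 0")
    case True thus ?thesis using Y by (simp add: young_fun_def)
  next
    case False
    hence t0: "t > 0" using t by simp
    have "\<Psi>1 1 * 1 powr (-p) \<le> \<Psi>1 t * t powr (-p)"
      by (rule upper_decay[OF Y1 h1]) (use t t0 in auto)
    hence "\<Psi>1 1 * t powr p \<le> \<Psi>1 t" using t0 by (intro powr_neg_le2) auto
    hence "\<Psi>1 1 / C1 * t powr p \<le> \<Psi>1 t / C1" using C1 by (simp add: divide_right_mono)
    moreover have "k * t powr p \<le> \<Psi>1 1 / C1 * t powr p" unfolding k_def
      by (rule mult_right_mono) auto
    ultimately show ?thesis using C1(2)[of t] t by linarith
  qed
  moreover have "k * t powr q \<le> \<Phi> t" if t: "t \<ge> 1" for t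
  proof -
    have t0: "t > 0" using t by simp
    have "\<Psi>2 1 * 1 powr (-q) \<le> \<Psi>2 t * t powr (-q)"
      by (rule lower_growth[OF Y2 h2]) (use t in auto)
    hence "\<Psi>2 1 * t powr q \<le> \<Psi>2 t" using t0 by (intro powr_neg_le2) auto
    hence "\<Psi>2 1 / C2 * t powr q \<le> \<Psi>2 t / C2" using C2 by (simp add: divide_right_mono)
    moreover have "k * t powr q \<le> \<Psi>2 1 / C2 * t powr q" unfolding k_def
      by (rule mult_right_mono) auto
    ultimately show ?thesis using C2(2)[of t] t by linarith
  qed
  ultimately show ?thesis using that by blast
qed



lemma young_meas:
  assumes Y: "young_fun \<Phi>" and f: "(f :: 'a::euclidean_space \<Rightarrow> real) \<in> borel_measurable lebesgue"
  shows "(\<lambda>x. ennreal (\<Phi> \<bar>f x\<bar>)) \<in> borel_measurable lebesgue"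
proof -
  define \<Phi>m where "\<Phi>m t = \<Phi> (max 0 t)" for t
  have "mono \<Phi>m" unfolding \<Phi>m_def
    by (intro monoI young_mono[OF Y]) (auto simp: max_def)
  hence m: "\<Phi>m \<in> borel_measurable borel" by (rule borel_measurable_mono)
  have fa: "(\<lambda>x. \<bar>f x\<bar>) \<in> borel_measurable lebesgue" using f by measurable
  have "(\<lambda>x. \<Phi>m \<bar>f x\<bar>) \<in> borel_measurable lebesgue"
    using measurable_compose[OF fa m] by (simp add: o_def)
  moreover have "(\<lambda>x. \<Phi>m \<bar>f x\<bar>) = (\<lambda>x. \<Phi> \<bar>f x\<bar>)" by (simp add: \<Phi>m_def)
  ultimately have "(\<lambda>x. \<Phi> \<bar>f x\<bar>) \<in> borel_measurable lebesgue" by simp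
  thus ?thesis by measurable
qed

lemma incl1:
  assumes K: "K > 0" and up: "\<And>t. t \<ge> 0 \<Longrightarrow> \<Phi> t \<le> K * (t powr p + t powr q)"
    and p: "p \<ge> 1" and q: "q \<ge> 1"
    and f: "(f :: 'a::euclidean_space \<Rightarrow> real) \<in> Lp_space p" "f \<in> Lp_space q"
  shows "f \<in> orlicz_space \<Phi>"
proof -
  have fm: "f \<in> borel_measurable lebesgue" using f by (simp add: Lp_space_def)
  define A where "A = (\<integral>\<^sup>+ x. ennreal (\<bar>f x\<bar> powr p) \<partial>lebesgue)"
  define B where "B = (\<integral>\<^sup>+ x. ennreal (\<bar>f x\<bar> powr q) \<partial>lebesgue)"
  have Af: "A < \<infinity>" "B < \<infinity>" using f by (auto simp: Lp_space_def A_def B_def)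
  define A' where "A' = enn2real A"
  define B' where "B' = enn2real B"
  have AA: "A = ennreal A'" "B = ennreal B'" using Af by (auto simp: A'_def B'_def ennreal_enn2real_if)
  have A0: "A' \<ge> 0" "B' \<ge> 0" by (auto simp: A'_def B'_def)
  define c where "c = 1 + K * (A' + B')"
  have c1: "c \<ge> 1" using K A0 unfolding c_def by simp
  hence c0: "c > 0" by simp
  have cp: "c powr (-p) \<le> 1 / c" "c powr (-q) \<le> 1 / c"
    using powr_mono[of "-p" "-1" c] powr_mono[of "-q" "-1" c] c1 p q
    by (auto simp: powr_minus_divide)
  have pw: "(\<bar>f x\<bar> / c) powr r = c powr (-r) * \<bar>f x\<bar> powr r" for x r
    using c0 by (simp add: powr_divide powr_minus_divide)
  have "modular \<Phi> (\<lambda>x. f x / c) = (\<integral>\<^sup>+ x. ennreal (\<Phi> (\<bar>f x\<bar> / c)) \<partial>lebesgue)"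
    using c0 by (simp add: modular_def)
  also have "\<dots> \<le> (\<integral>\<^sup>+ x. ennreal (K * c powr (-p)) * ennreal (\<bar>f x\<bar> powr p)
       + ennreal (K * c powr (-q)) * ennreal (\<bar>f x\<bar> powr q) \<partial>lebesgue)"
  proof (rule nn_integral_mono)
    fix x
    have "\<Phi> (\<bar>f x\<bar> / c) \<le> K * ((\<bar>f x\<bar> / c) powr p + (\<bar>f x\<bar> / c) powr q)"
      using up c0 by simp
    also have "\<dots> = K * c powr (-p) * \<bar>f x\<bar> powr p + K * c powr (-q) * \<bar>f x\<bar> powr q"
      unfolding pw by (simp add: algebra_simps)
    finally have "ennreal (\<Phi> (\<bar>f x\<bar> / c)) \<le> ennreal (K * c powr (-p) * \<bar>f x\<bar> powr p + K * c powr (-q) * \<bar>f x\<bar> powr q)"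
      by (rule ennreal_leI)
    also have "\<dots> = ennreal (K * c powr (-p)) * ennreal (\<bar>f x\<bar> powr p)
       + ennreal (K * c powr (-q)) * ennreal (\<bar>f x\<bar> powr q)"
    proof -
      have k1: "K * c powr (-p) \<ge> 0" "K * c powr (-q) \<ge> 0" using K by auto
      show ?thesis
        using ennreal_plus[of "K * c powr (-p) * \<bar>f x\<bar> powr p" "K * c powr (-q) * \<bar>f x\<bar> powr q"]
          ennreal_mult[OF k1(1), of "\<bar>f x\<bar> powr p"] ennreal_mult[OF k1(2), of "\<bar>f x\<bar> powr q"] k1
        by simp
    qed
    finally show "ennreal (\<Phi> (\<bar>f x\<bar> / c)) \<le> ennreal (K * c powr (-p)) * ennreal (\<bar>f x\<bar> powr p)
       + ennreal (K * c powr (-q)) * ennreal (\<bar>f x\<bar> powr q)" .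
  qed
  also have "\<dots> = ennreal (K * c powr (-p)) * A + ennreal (K * c powr (-q)) * B"
  proof -
    have m1: "(\<lambda>x. ennreal (\<bar>f x\<bar> powr p)) \<in> borel_measurable lebesgue" using fm by measurable
    have m2: "(\<lambda>x. ennreal (\<bar>f x\<bar> powr q)) \<in> borel_measurable lebesgue" using fm by measurable
    have m1': "(\<lambda>x. ennreal (K * c powr (-p)) * ennreal (\<bar>f x\<bar> powr p)) \<in> borel_measurable lebesgue"
      using m1 by measurable
    have m2': "(\<lambda>x. ennreal (K * c powr (-q)) * ennreal (\<bar>f x\<bar> powr q)) \<in> borel_measurable lebesgue"
      using m2 by measurable
    show ?thesis
      unfolding A_def B_def nn_integral_add[OF m1' m2'] nn_integral_cmult[OF m1] nn_integral_cmult[OF m2] ..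
  qed
  also have "\<dots> = ennreal (K * c powr (-p) * A' + K * c powr (-q) * B')"
  proof -
    have k1: "K * c powr (-p) \<ge> 0" "K * c powr (-q) \<ge> 0" using K by auto
    show ?thesis unfolding AA
      using ennreal_plus[of "K * c powr (-p) * A'" "K * c powr (-q) * B'"]
        ennreal_mult[OF k1(1) A0(1)] ennreal_mult[OF k1(2) A0(2)] k1 A0
      by simp
  qed
  also have "\<dots> \<le> ennreal (K * (1 / c) * A' + K * (1 / c) * B')"
    using K A0 cp by (intro ennreal_leI add_mono mult_right_mono mult_left_mono) auto
  also have "\<dots> \<le> 1"
  proof -
    have "K * (1 / c) * A' + K * (1 / c) * B' = K * (A' + B') / c" using c0 by (simp add: field_simps)
    also have "\<dots> \<le> 1" using c0 by (simp add: c_def)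
    finally show ?thesis by simp
  qed
  finally have "modular \<Phi> (\<lambda>x. f x / c) \<le> 1" .
  hence "luxemburg_norm \<Phi> f \<le> ennreal c"
    unfolding luxemburg_norm_def by (intro INF_lower) (use c0 in auto)
  moreover have "ennreal c < \<infinity>" by simp
  ultimately have "luxemburg_norm \<Phi> f < \<infinity>" by (rule le_less_trans)
  thus ?thesis using fm by (simp add: orlicz_space_def)
qed

lemma incl2:
  assumes Y: "young_fun \<Phi>" and k: "k > 0" and p: "p > 0" and q: "q > 0"
    and lo1: "\<And>t. 0 \<le> t \<Longrightarrow> t \<le> 1 \<Longrightarrow> k * t powr p \<le> \<Phi> t"
    and lo2: "\<And>t. t \<ge> 1 \<Longrightarrow> k * t powr q \<le> \<Phi> t"
    and f: "(f :: 'a::euclidean_space \<Rightarrow> real) \<in> orlicz_space \<Phi>"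
  shows "f \<in> Lp_sum p q"
proof -
  have fm: "f \<in> borel_measurable lebesgue" and fl: "luxemburg_norm \<Phi> f < \<infinity>"
    using f by (auto simp: orlicz_space_def)
  have "{c::real. c > 0 \<and> modular \<Phi> (\<lambda>x. f x / c) \<le> 1} \<noteq> {}"
  proof
    assume "{c::real. c > 0 \<and> modular \<Phi> (\<lambda>x. f x / c) \<le> 1} = {}"
    hence "luxemburg_norm \<Phi> f = top" unfolding luxemburg_norm_def by (metis image_empty Inf_empty)
    thus False using fl by auto
  qed
  then obtain c where c0: "c > 0" and cm: "modular \<Phi> (\<lambda>x. f x / c) \<le> 1" by blast
  define g where "g x = (if \<bar>f x\<bar> \<le> c then f x else 0)" for x
  define h where "h x = (if \<bar>f x\<bar> \<le> c then 0 else f x)" for x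
  have gm: "g \<in> borel_measurable lebesgue" unfolding g_def[abs_def] using fm by measurable
  have hm: "h \<in> borel_measurable lebesgue" unfolding h_def[abs_def] using fm by measurable
  have fc: "(\<lambda>x. f x / c) \<in> borel_measurable lebesgue" using fm by measurable
  have Fm: "(\<lambda>x. ennreal (\<Phi> \<bar>f x / c\<bar>)) \<in> borel_measurable lebesgue"
    by (rule young_meas[OF Y fc])
  have Mod: "modular \<Phi> (\<lambda>x. f x / c) = (\<integral>\<^sup>+ x. ennreal (\<Phi> \<bar>f x / c\<bar>) \<partial>lebesgue)"
    by (simp add: modular_def)
  have key: "(\<integral>\<^sup>+ x. ennreal (\<bar>u x\<bar> powr r) \<partial>lebesgue) < \<infinity>"
    if r: "r > 0" and pt: "\<And>x. \<bar>u x\<bar> powr r \<le> c powr r / k * \<Phi> \<bar>f x / c\<bar>" for u :: "'a \<Rightarrow> real" and r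
  proof -
    have "(\<integral>\<^sup>+ x. ennreal (\<bar>u x\<bar> powr r) \<partial>lebesgue)
        \<le> (\<integral>\<^sup>+ x. ennreal (c powr r / k) * ennreal (\<Phi> \<bar>f x / c\<bar>) \<partial>lebesgue)"
    proof (rule nn_integral_mono)
      fix x
      have "ennreal (\<bar>u x\<bar> powr r) \<le> ennreal (c powr r / k * \<Phi> \<bar>f x / c\<bar>)"
        by (rule ennreal_leI[OF pt])
      also have "\<dots> = ennreal (c powr r / k) * ennreal (\<Phi> \<bar>f x / c\<bar>)"
        by (rule ennreal_mult) (use k young_nonneg[OF Y] in auto)
      finally show "ennreal (\<bar>u x\<bar> powr r) \<le> ennreal (c powr r / k) * ennreal (\<Phi> \<bar>f x / c\<bar>)" .
    qed
    also have "\<dots> = ennreal (c powr r / k) * modular \<Phi> (\<lambda>x. f x / c)"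
      unfolding Mod by (rule nn_integral_cmult[OF Fm])
    also have "\<dots> \<le> ennreal (c powr r / k) * 1"
      by (rule mult_left_mono[OF cm]) simp
    also have "\<dots> < \<infinity>" by simp
    finally show ?thesis .
  qed
  have "g \<in> Lp_space p"
  proof -
    have "\<bar>g x\<bar> powr p \<le> c powr p / k * \<Phi> \<bar>f x / c\<bar>" for x
    proof (cases "\<bar>f x\<bar> \<le> c")
      case True
      have a: "\<bar>f x / c\<bar> = \<bar>f x\<bar> / c" using c0 by simp
      have "k * (\<bar>f x\<bar> / c) powr p \<le> \<Phi> (\<bar>f x\<bar> / c)"
        by (rule lo1) (use True c0 in auto)
      hence "(\<bar>f x\<bar> / c) powr p \<le> \<Phi> (\<bar>f x\<bar> / c) / k" using k by (simp add: le_divide_eq mult.commute)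
      hence "c powr p * (\<bar>f x\<bar> / c) powr p \<le> c powr p * (\<Phi> (\<bar>f x\<bar> / c) / k)"
        by (rule mult_left_mono) simp
      moreover have "c powr p * (\<bar>f x\<bar> / c) powr p = \<bar>f x\<bar> powr p"
        using c0 by (simp add: powr_divide)
      ultimately show ?thesis using True a by (simp add: g_def)
    next
      case False
      thus ?thesis using k c0 young_nonneg[OF Y, of "\<bar>f x / c\<bar>"] by (simp add: g_def)
    qed
    hence "(\<integral>\<^sup>+ x. ennreal (\<bar>g x\<bar> powr p) \<partial>lebesgue) < \<infinity>" by (intro key p)
    thus ?thesis using gm by (simp add: Lp_space_def)
  qed
  moreover have "h \<in> Lp_space q"
  proof -
    have "\<bar>h x\<bar> powr q \<le> c powr q / k * \<Phi> \<bar>f x / c\<bar>" for x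
    proof (cases "\<bar>f x\<bar> \<le> c")
      case False
      have a: "\<bar>f x / c\<bar> = \<bar>f x\<bar> / c" using c0 by simp
      have "k * (\<bar>f x\<bar> / c) powr q \<le> \<Phi> (\<bar>f x\<bar> / c)"
        by (rule lo2) (use False c0 in auto)
      hence "(\<bar>f x\<bar> / c) powr q \<le> \<Phi> (\<bar>f x\<bar> / c) / k" using k by (simp add: le_divide_eq mult.commute)
      hence "c powr q * (\<bar>f x\<bar> / c) powr q \<le> c powr q * (\<Phi> (\<bar>f x\<bar> / c) / k)"
        by (rule mult_left_mono) simp
      moreover have "c powr q * (\<bar>f x\<bar> / c) powr q = \<bar>f x\<bar> powr q"
        using c0 by (simp add: powr_divide)
      ultimately show ?thesis using False a c0 by (simp add: h_def)
    next
      case True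
      thus ?thesis using k c0 young_nonneg[OF Y, of "\<bar>f x / c\<bar>"] by (simp add: h_def)
    qed
    hence "(\<integral>\<^sup>+ x. ennreal (\<bar>h x\<bar> powr q) \<partial>lebesgue) < \<infinity>" by (intro key q)
    thus ?thesis using hm by (simp add: Lp_space_def)
  qed
  moreover have "f = (\<lambda>x. g x + h x)" by (auto simp: g_def h_def)
  ultimately show ?thesis unfolding Lp_sum_def by blast
qed


theorem mainTheorem13:
  fixes \<Phi> :: "real \<Rightarrow> real" and p q :: real
  assumes "young_fun \<Phi>"
    and "\<exists>L. (index_ratio \<Phi> \<longlongrightarrow> L) (at_right 0)"
    and "\<exists>L. (index_ratio \<Phi> \<longlongrightarrow> L) at_top"
    and "1 < q_class \<Phi>" and "q_class \<Phi> \<le> p_class \<Phi>" and "p_class \<Phi> < \<infinity>"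
    and "p_class \<Phi> < ereal p"
    and "1 < q" and "ereal q < q_class \<Phi>"
  shows "Lp_space p \<inter> Lp_space q \<subseteq> (orlicz_space \<Phi> :: (real ^ 'n \<Rightarrow> real) set)
         \<and> (orlicz_space \<Phi> :: (real ^ 'n \<Rightarrow> real) set) \<subseteq> Lp_sum p q"
proof -
  obtain K k where K: "K > 0" "k > 0" "\<And>t. t \<ge> 0 \<Longrightarrow> \<Phi> t \<le> K * (t powr p + t powr q)"
    "\<And>t. 0 \<le> t \<Longrightarrow> t \<le> 1 \<Longrightarrow> k * t powr p \<le> \<Phi> t"
    "\<And>t. t \<ge> 1 \<Longrightarrow> k * t powr q \<le> \<Phi> t"
    using Phi_bounds[OF assms(1) assms(7) assms(9)] by blast
  have "(1::ereal) < p_class \<Phi>" using assms(4,5) by (rule less_le_trans)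
  hence "(1::ereal) < ereal p" using assms(7) by (rule less_trans)
  hence p1: "p > 1" by (simp add: one_ereal_def)
  have q1: "q > 1" by (rule assms(8))
  show ?thesis
  proof
    show "Lp_space p \<inter> Lp_space q \<subseteq> (orlicz_space \<Phi> :: (real ^ 'n \<Rightarrow> real) set)"
      using incl1[OF K(1) K(3)] p1 q1 by auto
    show "(orlicz_space \<Phi> :: (real ^ 'n \<Rightarrow> real) set) \<subseteq> Lp_sum p q"
      using incl2[OF assms(1) K(2) _ _ K(4) K(5)] p1 q1 by auto
  qed
qed

end
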